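(* Let $G$, $w$, $\nu$ be as in the context. Let $\widehat{\mathcal{S}}=(S_m)_{m=0,\ldots,n}$ be a finite sequence of pairwise disjoint subsets of $V(G)$ (not necessarily covering $V(G)$), and assume $\widehat{K}_m>0$ and $\widehat{D}_m>0$ for all $m=0,\ldots,n-1$. Write $f_0=f|_{S_0}$. Then for all $1<p<\infty$, $1<q<\infty$ with $1/p+1/q=1$, and all $f\in\ell^p_\nu(G)$, \[ \|f\|_{p,\nu}+\left(\sum_{m=1}^n\left(\sum_{k=0}^{m-1}\frac{1}{\widehat{K}_k^{q/p}}\left(\prod_{i=k}^{m-1}\frac{\widehat{K}_i}{\widehat{D}_i}\right)^{q/p}\right)^{p/q}\right)^{1/p}\|\nabla_w f\|_p\ \ge\ \left(\sum_{m=0}^n\prod_{j=0}^{m-1}\frac{\widehat{K}_j}{\widehat{D}_j}\right)^{1/p}\|f_0\|_{p,\nu}. \] Moreover, for all $f\in\ell^1_\nu(G)$, \[ \|f\|_{1,\nu}+\max_{k=0,\ldots,n-1}\frac{1}{\widehat{K}_k}\sum_{m=k}^n\left(\prod_{i=k}^{m-1}\frac{\widehat{K}_i}{\widehat{D}_i}\right)\|\nabla_w f\|_1\ \ge\ \left(\sum_{m=0}^n\prod_{j=0}^{m-1}\frac{\widehat{K}_j}{\widehat{D}_j}\right)\|f_0\|_{1,\nu}. \]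
   Context: $G$ is an undirected weighted graph: $V(G)$ is a (countable) vertex set and $w:V(G)\times V(G)\to[0,\infty)$ is symmetric with $w(u,u)=0$; edges are pairs with $w(u,v)\neq0$. $\nu:V(G)\to(0,\infty)$ is a fixed vertex weight. $\ell^p_\nu(G)$ is the space of $f:V(G)\to\mathbb{C}$ with $\|f\|_{p,\nu}=\left(\sum_{v}|f(v)|^p\nu(v)\right)^{1/p}<\infty$, and $\|f|_A\|_{p,\nu}$ is the same sum over $v\in A$. $\|\nabla_w f\|_p=\left(\sum_{u,v\in V(G)}|f(u)-f(v)|^pw(u,v)\right)^{1/p}$. For $A\subset V(G)$, $w_A(v)=\sum_{u\in A}w(u,v)$. For the sequence $\widehat{\mathcal{S}}=(S_m)_{m=0,\ldots,n}$ and $0\le m<n$: $\widehat{K}_m=\inf_{v\in S_m}\frac{w_{S_{m+1}}(v)}{\nu(v)}$ and $\widehat{D}_m=\sup_{v\in S_{m+1}}\frac{w_{S_m}(v)}{\nu(v)}$. Empty products equal $1$, empty sums equal $0$. *)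

theory Defs
  imports "HOL-Analysis.Analysis"
begin

text \<open>Weighted graph on the vertex type 'v: edge weight w, vertex weight nu.\<close>

definition lp_sum :: "('v \<Rightarrow> real) \<Rightarrow> real \<Rightarrow> ('v \<Rightarrow> complex) \<Rightarrow> 'v set \<Rightarrow> real" where
  "lp_sum nu p f A = infsum (\<lambda>v. cmod (f v) powr p * nu v) A"

definition in_lp :: "('v \<Rightarrow> real) \<Rightarrow> real \<Rightarrow> ('v \<Rightarrow> complex) \<Rightarrow> bool" where
  "in_lp nu p f \<longleftrightarrow> (\<lambda>v. cmod (f v) powr p * nu v) summable_on UNIV"

definition pnorm_on :: "('v \<Rightarrow> real) \<Rightarrow> real \<Rightarrow> ('v \<Rightarrow> complex) \<Rightarrow> 'v set \<Rightarrow> real" where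
  "pnorm_on nu p f A = lp_sum nu p f A powr (1 / p)"

definition grad_norm :: "('v \<Rightarrow> 'v \<Rightarrow> real) \<Rightarrow> real \<Rightarrow> ('v \<Rightarrow> complex) \<Rightarrow> ereal" where
  "grad_norm w p f =
     (if (\<lambda>(u, v). cmod (f u - f v) powr p * w u v) summable_on UNIV
      then ereal ((infsum (\<lambda>(u, v). cmod (f u - f v) powr p * w u v) UNIV) powr (1 / p))
      else \<infinity>)"

definition wA :: "('v \<Rightarrow> 'v \<Rightarrow> real) \<Rightarrow> 'v set \<Rightarrow> 'v \<Rightarrow> ereal" where
  "wA w A v = (if (\<lambda>u. w u v) summable_on A then ereal (infsum (\<lambda>u. w u v) A) else \<infinity>)"

definition Khat :: "('v \<Rightarrow> 'v \<Rightarrow> real) \<Rightarrow> ('v \<Rightarrow> real) \<Rightarrow> (nat \<Rightarrow> 'v set) \<Rightarrow> nat \<Rightarrow> ereal" where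
  "Khat w nu S m = (INF v\<in>S m. wA w (S (Suc m)) v / ereal (nu v))"

definition Dhat :: "('v \<Rightarrow> 'v \<Rightarrow> real) \<Rightarrow> ('v \<Rightarrow> real) \<Rightarrow> (nat \<Rightarrow> 'v set) \<Rightarrow> nat \<Rightarrow> ereal" where
  "Dhat w nu S m = (SUP v\<in>S (Suc m). wA w (S m) v / ereal (nu v))"

end

theory Submission
  imports Defs
begin

lemma convex_pt:
  fixes p a b t :: real
  assumes p: "1 \<le> p" and a: "0 \<le> a" and b: "0 \<le> b" and t0: "0 \<le> t" and t1: "t \<le> 1"
  shows "(t*a + (1-t)*b) powr p \<le> t * a powr p + (1-t) * b powr p"
proof -
  have pw: "s powr p \<le> s" if "0 \<le> s" "s \<le> 1" for s :: real
  proof (cases "s = 0")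
    case True then show ?thesis by simp
  next
    case False
    then have "s powr p \<le> s powr 1" using that p by (intro powr_mono') auto
    then show ?thesis using that by simp
  qed
  show ?thesis
  proof (cases "a = 0")
    case True
    have "(t*a + (1-t)*b) powr p = (1-t) powr p * b powr p" using True t1 b by (simp add: powr_mult)
    also have "\<dots> \<le> (1-t) * b powr p" using pw[of "1-t"] t0 t1 by (intro mult_right_mono) auto
    finally show ?thesis using True t0 by simp
  next
    case an: False
    show ?thesis
    proof (cases "b = 0")
      case True
      have "(t*a + (1-t)*b) powr p = t powr p * a powr p" using True t0 a by (simp add: powr_mult)
      also have "\<dots> \<le> t * a powr p" using pw[of "t"] t0 t1 by (intro mult_right_mono) auto
      finally show ?thesis using True t1 by simp
    next
      case False
      have "convex_on {0<..} (\<lambda>x::real. x powr p)" using powr_convex p by blast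
      from convex_onD[OF this, of "1-t" a b] False an a b t0 t1
      show ?thesis by (simp add: algebra_simps)
    qed
  qed
qed

lemma minkowski_infsum:
  fixes W x y :: "'a \<Rightarrow> real" and p :: real
  assumes p: "1 \<le> p"
    and W: "\<And>i. i \<in> I \<Longrightarrow> 0 \<le> W i" and x: "\<And>i. i \<in> I \<Longrightarrow> 0 \<le> x i"
    and y: "\<And>i. i \<in> I \<Longrightarrow> 0 \<le> y i"
    and sx: "(\<lambda>i. W i * x i powr p) summable_on I"
    and sy: "(\<lambda>i. W i * y i powr p) summable_on I"
  shows "(\<lambda>i. W i * (x i + y i) powr p) summable_on I \<and>
    infsum (\<lambda>i. W i * (x i + y i) powr p) I powr (1/p)
      \<le> infsum (\<lambda>i. W i * x i powr p) I powr (1/p) + infsum (\<lambda>i. W i * y i powr p) I powr (1/p)"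
proof -
  define SA where "SA = infsum (\<lambda>i. W i * x i powr p) I"
  define SB where "SB = infsum (\<lambda>i. W i * y i powr p) I"
  have SA0: "0 \<le> SA" unfolding SA_def using W by (intro infsum_nonneg) auto
  have SB0: "0 \<le> SB" unfolding SB_def using W by (intro infsum_nonneg) auto
  have p0: "0 < p" using p by simp
  show ?thesis
  proof (cases "SA = 0")
    case True
    have z: "W i * x i powr p = 0" if "i \<in> I" for i
    proof (rule nonneg_infsum_le_0D[OF _ sx _ that])
      show "infsum (\<lambda>i. W i * x i powr p) I \<le> 0" using True unfolding SA_def by simp
      show "\<And>j. j\<in>I \<Longrightarrow> 0 \<le> W j * x j powr p" using W by simp
    qed
    have eq: "W i * (x i + y i) powr p = W i * y i powr p" if "i \<in> I" for i
      using z[OF that] by auto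
    have s: "(\<lambda>i. W i * (x i + y i) powr p) summable_on I" by (subst summable_on_cong[OF eq]) (auto intro: sy)
    have "infsum (\<lambda>i. W i * (x i + y i) powr p) I = SB" unfolding SB_def using eq by (rule infsum_cong)
    moreover have "infsum (\<lambda>i. W i * x i powr p) I = 0" using True unfolding SA_def .
    ultimately show ?thesis using s unfolding SB_def by simp
  next
    case SAn: False
    show ?thesis
    proof (cases "SB = 0")
      case True
      have z: "W i * y i powr p = 0" if "i \<in> I" for i
    proof (rule nonneg_infsum_le_0D[OF _ sy _ that])
      show "infsum (\<lambda>i. W i * y i powr p) I \<le> 0" using True unfolding SB_def by simp
      show "\<And>j. j\<in>I \<Longrightarrow> 0 \<le> W j * y j powr p" using W by simp
    qed
      have eq: "W i * (x i + y i) powr p = W i * x i powr p" if "i \<in> I" for i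
        using z[OF that] by auto
      have s: "(\<lambda>i. W i * (x i + y i) powr p) summable_on I" by (subst summable_on_cong[OF eq]) (auto intro: sx)
      have "infsum (\<lambda>i. W i * (x i + y i) powr p) I = SA" unfolding SA_def using eq by (rule infsum_cong)
      moreover have "infsum (\<lambda>i. W i * y i powr p) I = 0" using True unfolding SB_def .
      ultimately show ?thesis using s unfolding SA_def by simp
    next
      case False
      have SAp: "0 < SA" using SA0 SAn by simp
      have SBp: "0 < SB" using SB0 False by simp
      define A where "A = SA powr (1/p)"
      define B where "B = SB powr (1/p)"
      have Ap: "0 < A" and Bp: "0 < B" using SAp SBp by (auto simp: A_def B_def)
      have ApA: "A powr p = SA" using SAp p0 by (simp add: A_def powr_powr)
      have BpB: "B powr p = SB" using SBp p0 by (simp add: B_def powr_powr)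
      define t where "t = A / (A + B)"
      have t0: "0 \<le> t" and t1: "t \<le> 1" using Ap Bp by (auto simp: t_def)
      have 1: "1 - t = B / (A + B)" using Ap Bp by (simp add: t_def field_simps)
      define R where "R i = (A + B) powr p * (t / SA * (W i * x i powr p) + (1 - t) / SB * (W i * y i powr p))" for i
      have le: "W i * (x i + y i) powr p \<le> R i" if i: "i \<in> I" for i
      proof -
        have e1: "t * (x i / A) = x i / (A + B)" using Ap Bp by (simp add: t_def)
        have e2: "(1 - t) * (y i / B) = y i / (A + B)" using Ap Bp by (simp add: 1)
        have "x i + y i = (A + B) * (t * (x i / A) + (1 - t) * (y i / B))"
          using Ap Bp unfolding e1 e2 by (simp add: add_divide_distrib[symmetric])
        then have "(x i + y i) powr p = (A + B) powr p * (t * (x i / A) + (1 - t) * (y i / B)) powr p"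
          using Ap Bp x[OF i] y[OF i] t0 t1 by (simp add: powr_mult)
        also have "\<dots> \<le> (A + B) powr p * (t * (x i / A) powr p + (1 - t) * (y i / B) powr p)"
          using Ap Bp x[OF i] y[OF i] t0 t1 p
          by (intro mult_left_mono convex_pt) auto
        also have "\<dots> = (A + B) powr p * (t / SA * x i powr p + (1 - t) / SB * y i powr p)"
          using Ap Bp x[OF i] y[OF i] by (simp add: powr_divide ApA BpB)
        finally have "W i * (x i + y i) powr p \<le> W i * ((A + B) powr p * (t / SA * x i powr p + (1 - t) / SB * y i powr p))"
          by (rule mult_left_mono) (use W[OF i] in auto)
        also have "\<dots> = R i" by (simp add: R_def algebra_simps)
        finally show ?thesis .
      qed
      have sR: "R summable_on I" unfolding R_def
        by (intro summable_on_cmult_right summable_on_add sx sy)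
      have iR: "infsum R I = (A + B) powr p"
      proof -
        have "infsum R I = (A + B) powr p * infsum (\<lambda>i. t / SA * (W i * x i powr p) + (1 - t) / SB * (W i * y i powr p)) I"
          unfolding R_def by (rule infsum_cmult_right')
        also have "infsum (\<lambda>i. t / SA * (W i * x i powr p) + (1 - t) / SB * (W i * y i powr p)) I
            = infsum (\<lambda>i. t / SA * (W i * x i powr p)) I + infsum (\<lambda>i. (1 - t) / SB * (W i * y i powr p)) I"
          by (rule infsum_add) (intro summable_on_cmult_right sx sy)+
        also have "\<dots> = t / SA * SA + (1 - t) / SB * SB"
          by (simp only: infsum_cmult_right' SA_def SB_def)
        finally show ?thesis using SAp SBp by simp
      qed
      have sZ: "(\<lambda>i. W i * (x i + y i) powr p) summable_on I"
        using sR le W by (intro summable_on_comparison_test[OF sR]) auto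
      have "infsum (\<lambda>i. W i * (x i + y i) powr p) I \<le> (A + B) powr p"
        using infsum_mono[OF sZ sR le] iR by simp
      then have "infsum (\<lambda>i. W i * (x i + y i) powr p) I powr (1/p) \<le> ((A + B) powr p) powr (1/p)"
        using W x y p0 by (intro powr_mono2) (auto intro!: infsum_nonneg)
      also have "\<dots> = A + B" using Ap Bp p0 by (simp add: powr_powr)
      finally show ?thesis using sZ by (simp add: A_def B_def SA_def SB_def)
    qed
  qed
qed



lemma holder_sum:
  fixes c e :: "'a \<Rightarrow> real"
  assumes F: "finite F" and pq: "1 < p" "1 < q" "1/p + 1/q = 1"
    and c0: "\<And>i. i \<in> F \<Longrightarrow> 0 \<le> c i" and e0: "\<And>i. i \<in> F \<Longrightarrow> 0 \<le> e i"
  shows "(\<Sum>i\<in>F. c i * e i) \<le> (\<Sum>i\<in>F. c i powr q) powr (1/q) * (\<Sum>i\<in>F. e i powr p) powr (1/p)"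
proof -
  define Cq where "Cq = (\<Sum>i\<in>F. c i powr q)"
  define Ep where "Ep = (\<Sum>i\<in>F. e i powr p)"
  have Cq0: "0 \<le> Cq" and Ep0: "0 \<le> Ep" unfolding Cq_def Ep_def by (auto intro: sum_nonneg)
  have L0: "0 \<le> (\<Sum>i\<in>F. c i * e i)" using c0 e0 by (auto intro: sum_nonneg)
  show ?thesis
  proof (cases "Cq = 0 \<or> Ep = 0")
    case True
    then have "\<forall>i\<in>F. c i * e i = 0"
    proof
      assume "Cq = 0"
      then have "\<forall>i\<in>F. c i powr q = 0" unfolding Cq_def using F by (subst (asm) sum_nonneg_eq_0_iff) auto
      then show ?thesis by simp
    next
      assume "Ep = 0"
      then have "\<forall>i\<in>F. e i powr p = 0" unfolding Ep_def using F by (subst (asm) sum_nonneg_eq_0_iff) auto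
      then show ?thesis by simp
    qed
    then have "(\<Sum>i\<in>F. c i * e i) = 0" by (intro sum.neutral) simp
    then show ?thesis using Cq0 Ep0 by (simp flip: Cq_def Ep_def)
  next
    case False
    then have Cp: "0 < Cq" and Epp: "0 < Ep" using Cq0 Ep0 by auto
    define \<alpha> where "\<alpha> = Cq powr (1/q)"
    define \<beta> where "\<beta> = Ep powr (1/p)"
    have ap: "0 < \<alpha>" "0 < \<beta>" using Cp Epp by (auto simp: \<alpha>_def \<beta>_def)
    have aq: "\<alpha> powr q = Cq" using Cp pq by (simp add: \<alpha>_def powr_powr)
    have bp: "\<beta> powr p = Ep" using Epp pq by (simp add: \<beta>_def powr_powr)
    have y: "c i * e i / (\<alpha> * \<beta>) \<le> c i powr q / (Cq * q) + e i powr p / (Ep * p)" if i: "i \<in> F" for i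
    proof -
      have "(c i / \<alpha>) * (e i / \<beta>) \<le> (c i / \<alpha>) powr q / q + (e i / \<beta>) powr p / p"
        using Youngs_inequality[of q p "c i / \<alpha>" "e i / \<beta>"] pq c0[OF i] e0[OF i] ap by (simp add: add.commute)
      also have "\<dots> = c i powr q / (Cq * q) + e i powr p / (Ep * p)"
        using c0[OF i] e0[OF i] ap by (simp add: powr_divide aq bp)
      finally show ?thesis by simp
    qed
    have "(\<Sum>i\<in>F. c i * e i) / (\<alpha> * \<beta>) = (\<Sum>i\<in>F. c i * e i / (\<alpha> * \<beta>))"
      by (simp add: sum_divide_distrib)
    also have "\<dots> \<le> (\<Sum>i\<in>F. c i powr q / (Cq * q) + e i powr p / (Ep * p))"
      by (rule sum_mono) (rule y)
    also have "\<dots> = Cq / (Cq * q) + Ep / (Ep * p)"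
      by (simp add: sum.distrib Cq_def Ep_def sum_divide_distrib)
    also have "\<dots> = 1" using Cp Epp pq by simp
    finally have "(\<Sum>i\<in>F. c i * e i) \<le> \<alpha> * \<beta>" using ap by (simp add: divide_le_eq)
    then show ?thesis by (simp add: \<alpha>_def \<beta>_def Cq_def Ep_def)
  qed
qed

locale gsetting =
  fixes w :: "'v \<Rightarrow> 'v \<Rightarrow> real" and nu :: "'v \<Rightarrow> real" and S :: "nat \<Rightarrow> 'v set" and n :: nat
  assumes w_nonneg: "\<And>u v. 0 \<le> w u v"
    and w_sym: "\<And>u v. w u v = w v u"
    and nu_pos: "\<And>v. 0 < nu v"
    and disj: "\<And>i j. i \<le> n \<Longrightarrow> j \<le> n \<Longrightarrow> i \<noteq> j \<Longrightarrow> S i \<inter> S j = {}"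
    and K_pos: "\<And>m. m < n \<Longrightarrow> 0 < Khat w nu S m \<and> Khat w nu S m < \<infinity>"
    and D_pos: "\<And>m. m < n \<Longrightarrow> 0 < Dhat w nu S m \<and> Dhat w nu S m < \<infinity>"
begin

definition Kr where "Kr m = real_of_ereal (Khat w nu S m)"
definition Dr where "Dr m = real_of_ereal (Dhat w nu S m)"

lemma Khat_eq: "m < n \<Longrightarrow> Khat w nu S m = ereal (Kr m) \<and> 0 < Kr m"
  using K_pos[of m] unfolding Kr_def by (cases "Khat w nu S m") auto

lemma Dhat_eq: "m < n \<Longrightarrow> Dhat w nu S m = ereal (Dr m) \<and> 0 < Dr m"
  using D_pos[of m] unfolding Dr_def by (cases "Dhat w nu S m") auto

lemma Kr_pos: "m < n \<Longrightarrow> 0 < Kr m" using Khat_eq by blast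
lemma Dr_pos: "m < n \<Longrightarrow> 0 < Dr m" using Dhat_eq by blast

lemma K_bound:
  assumes m: "m < n" and v: "v \<in> S m" and s: "(\<lambda>u. w u v) summable_on S (Suc m)"
  shows "Kr m * nu v \<le> infsum (\<lambda>u. w u v) (S (Suc m))"
proof -
  have "Khat w nu S m \<le> wA w (S (Suc m)) v / ereal (nu v)"
    unfolding Khat_def using v by (rule INF_lower)
  also have "\<dots> = ereal (infsum (\<lambda>u. w u v) (S (Suc m)) / nu v)"
    using s nu_pos[of v] by (simp add: wA_def)
  finally have "Kr m \<le> infsum (\<lambda>u. w u v) (S (Suc m)) / nu v" using Khat_eq[OF m] by simp
  then show ?thesis using nu_pos[of v] by (simp add: field_simps)
qed

lemma D_bound:
  assumes m: "m < n" and v: "v \<in> S (Suc m)"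
  shows "(\<lambda>u. w u v) summable_on S m \<and> infsum (\<lambda>u. w u v) (S m) \<le> Dr m * nu v"
proof -
  have le: "wA w (S m) v / ereal (nu v) \<le> Dhat w nu S m"
    unfolding Dhat_def using v by (rule SUP_upper)
  have s: "(\<lambda>u. w u v) summable_on S m"
  proof (rule ccontr)
    assume "\<not> ?thesis"
    then have "wA w (S m) v / ereal (nu v) = \<infinity>" using nu_pos[of v] by (simp add: wA_def)
    then show False using le D_pos[OF m] by simp
  qed
  have "ereal (infsum (\<lambda>u. w u v) (S m) / nu v) \<le> ereal (Dr m)"
    using le s nu_pos[of v] Dhat_eq[OF m] by (simp add: wA_def)
  then have "infsum (\<lambda>u. w u v) (S m) / nu v \<le> Dr m" by simp
  then show ?thesis using s nu_pos[of v] by (simp add: field_simps)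
qed


lemma Kr_nonneg: "0 \<le> Kr m"
proof -
  have "0 \<le> Khat w nu S m" unfolding Khat_def
  proof (rule INF_greatest)
    fix v assume "v \<in> S m"
    have "0 \<le> wA w (S (Suc m)) v" unfolding wA_def using w_nonneg by (auto intro: infsum_nonneg)
    then show "0 \<le> wA w (S (Suc m)) v / ereal (nu v)" using nu_pos[of v]
      by (cases "wA w (S (Suc m)) v") auto
  qed
  then show ?thesis unfolding Kr_def by (rule real_of_ereal_pos)
qed

lemma Dr_nonneg: "0 \<le> Dr m"
proof (cases "S (Suc m) = {}")
  case True
  then show ?thesis unfolding Dr_def Dhat_def by (simp add: bot_ereal_def)
next
  case False
  then obtain v where v: "v \<in> S (Suc m)" by blast
  have "0 \<le> wA w (S m) v" unfolding wA_def using w_nonneg by (auto intro: infsum_nonneg)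
  then have "0 \<le> wA w (S m) v / ereal (nu v)" using nu_pos[of v]
    by (cases "wA w (S m) v") auto
  also have "\<dots> \<le> Dhat w nu S m" unfolding Dhat_def using v by (rule SUP_upper)
  finally show ?thesis unfolding Dr_def by (rule real_of_ereal_pos)
qed

lemma prodKD_nonneg: "0 \<le> (\<Prod>i\<in>A. Kr i / Dr i)"
  using Kr_nonneg Dr_nonneg by (intro prod_nonneg) (auto intro: divide_nonneg_nonneg)

lemma X_nonneg: "0 \<le> 1 / Kr k * (\<Prod>i\<in>A. Kr i / Dr i)"
  using Kr_nonneg prodKD_nonneg by simp

lemma lp_sum_nonneg: "0 \<le> lp_sum nu p f A"
  unfolding lp_sum_def using nu_pos by (intro infsum_nonneg mult_nonneg_nonneg) (auto simp: less_imp_le)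

lemma Lsum_le:
  assumes flp: "in_lp nu p f"
  shows "(\<Sum>m\<le>n. lp_sum nu p f (S m)) \<le> lp_sum nu p f UNIV"
proof -
  have fs: "(\<lambda>v. cmod (f v) powr p * nu v) summable_on A" for A
    using flp unfolding in_lp_def by (rule summable_on_subset_banach) auto
  have "(\<Sum>m\<le>n. lp_sum nu p f (S m)) = infsum (\<lambda>v. cmod (f v) powr p * nu v) (\<Union>m\<in>{..n}. S m)"
    unfolding lp_sum_def by (rule sum_infsum) (auto intro: fs dest: disj)
  also have "\<dots> \<le> lp_sum nu p f UNIV" unfolding lp_sum_def
    by (rule infsum_mono_neutral) (use fs in \<open>auto intro!: mult_nonneg_nonneg simp: less_imp_le[OF nu_pos]\<close>)
  finally show ?thesis .
qed

lemma Esum_le: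
  assumes gs: "(\<lambda>(u,v). cmod (f u - f v) powr p * w u v) summable_on UNIV"
  shows "(\<Sum>k<n. infsum (\<lambda>(u,v). cmod (f u - f v) powr p * w u v) (S k \<times> S (Suc k)))
     \<le> infsum (\<lambda>(u,v). cmod (f u - f v) powr p * w u v) UNIV"
proof -
  have s: "(\<lambda>(u,v). cmod (f u - f v) powr p * w u v) summable_on A" for A
    using gs by (rule summable_on_subset_banach) auto
  have "(\<Sum>k<n. infsum (\<lambda>(u,v). cmod (f u - f v) powr p * w u v) (S k \<times> S (Suc k)))
     = infsum (\<lambda>(u,v). cmod (f u - f v) powr p * w u v) (\<Union>k\<in>{..<n}. S k \<times> S (Suc k))"
  proof (rule sum_infsum)
    show "\<And>a a'. a \<in> {..<n} \<Longrightarrow> a' \<in> {..<n} \<Longrightarrow> a \<noteq> a' \<Longrightarrow> S a \<times> S (Suc a) \<inter> S a' \<times> S (Suc a') = {}"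
    proof -
      fix a a' assume "a \<in> {..<n}" "a' \<in> {..<n}" "a \<noteq> a'"
      then have "S a \<inter> S a' = {}" using disj[of a a'] by auto
      then show "S a \<times> S (Suc a) \<inter> S a' \<times> S (Suc a') = {}" by auto
    qed
  qed (auto intro: s)
  also have "\<dots> \<le> infsum (\<lambda>(u,v). cmod (f u - f v) powr p * w u v) UNIV"
    by (rule infsum_mono_neutral) (use s w_nonneg in \<open>auto intro: mult_nonneg_nonneg\<close>)
  finally show ?thesis .
qed

context
  fixes p :: real and f :: "'v \<Rightarrow> complex"
  assumes p1: "1 \<le> p" and flp: "in_lp nu p f"
    and gsum: "(\<lambda>(u,v). cmod (f u - f v) powr p * w u v) summable_on UNIV"
begin

lemma fs: "(\<lambda>v. cmod (f v) powr p * nu v) summable_on A"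
  using flp unfolding in_lp_def by (rule summable_on_subset_banach) auto

lemma step:
  assumes m: "m < n"
  shows "Kr m powr (1/p) * lp_sum nu p f (S m) powr (1/p)
     \<le> Dr m powr (1/p) * lp_sum nu p f (S (Suc m)) powr (1/p)
        + infsum (\<lambda>(u,v). cmod (f u - f v) powr p * w u v) (S m \<times> S (Suc m)) powr (1/p)"
proof -
  let ?I = "S m \<times> S (Suc m)"
  have p0: "0 < p" using p1 by simp
  define g where "g y = infsum (\<lambda>x. w x y) (S m) * cmod (f y) powr p" for y
  have inner: "((\<lambda>x. w x y * cmod (f y) powr p) has_sum g y) (S m)" if "y \<in> S (Suc m)" for y
    unfolding g_def using D_bound[OF m that] by (intro has_sum_cmult_left has_sum_infsum) auto
  have gle: "g y \<le> Dr m * (cmod (f y) powr p * nu y)" if "y \<in> S (Suc m)" for y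
  proof -
    have "g y \<le> (Dr m * nu y) * cmod (f y) powr p"
      unfolding g_def using D_bound[OF m that] by (intro mult_right_mono) auto
    then show ?thesis by (simp add: algebra_simps)
  qed
  have g0: "0 \<le> g y" for y unfolding g_def using w_nonneg by (intro mult_nonneg_nonneg infsum_nonneg) auto
  have gs': "g summable_on S (Suc m)"
    by (rule summable_on_comparison_test[OF summable_on_cmult_right[OF fs]]) (use gle g0 in auto)
  have hsw: "((\<lambda>(y,x). w x y * cmod (f y) powr p) has_sum infsum g (S (Suc m))) (S (Suc m) \<times> S m)"
  proof (rule has_sum_SigmaI[where g=g])
    show "((\<lambda>x. case (y, x) of (y, x) \<Rightarrow> w x y * cmod (f y) powr p) has_sum g y) (S m)"
      if "y \<in> S (Suc m)" for y using inner[OF that] by simp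
    show "(g has_sum infsum g (S (Suc m))) (S (Suc m))" using gs' by (rule has_sum_infsum)
    show "(\<lambda>(y,x). w x y * cmod (f y) powr p) summable_on S (Suc m) \<times> S m"
      by (rule summable_on_SigmaI[where g=g]) (use inner gs' w_nonneg in auto)
  qed
  have hX: "((\<lambda>(x,y). w x y * cmod (f y) powr p) has_sum infsum g (S (Suc m))) ?I"
    using hsw by (subst has_sum_swap) simp
  have sumX_le: "infsum g (S (Suc m)) \<le> Dr m * lp_sum nu p f (S (Suc m))"
  proof -
    have "infsum g (S (Suc m)) \<le> infsum (\<lambda>y. Dr m * (cmod (f y) powr p * nu y)) (S (Suc m))"
      by (rule infsum_mono[OF gs' summable_on_cmult_right[OF fs] gle])
    also have "\<dots> = Dr m * lp_sum nu p f (S (Suc m))"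
      unfolding lp_sum_def by (rule infsum_cmult_right')
    finally show ?thesis .
  qed
  have sY: "(\<lambda>(x,y). w x y * cmod (f x - f y) powr p) summable_on ?I"
  proof -
    have "(\<lambda>(u,v). cmod (f u - f v) powr p * w u v) summable_on ?I"
      by (rule summable_on_subset_banach[OF gsum]) auto
    then show ?thesis by (simp add: mult.commute)
  qed
  have iY: "infsum (\<lambda>(x,y). w x y * cmod (f x - f y) powr p) ?I
      = infsum (\<lambda>(u,v). cmod (f u - f v) powr p * w u v) ?I"
    by (simp add: mult.commute)
  have mk: "(\<lambda>i. w (fst i) (snd i) * (cmod (f (snd i)) + cmod (f (fst i) - f (snd i))) powr p) summable_on ?I \<and>
    infsum (\<lambda>i. w (fst i) (snd i) * (cmod (f (snd i)) + cmod (f (fst i) - f (snd i))) powr p) ?I powr (1/p)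
      \<le> infsum (\<lambda>i. w (fst i) (snd i) * cmod (f (snd i)) powr p) ?I powr (1/p)
       + infsum (\<lambda>i. w (fst i) (snd i) * cmod (f (fst i) - f (snd i)) powr p) ?I powr (1/p)"
    by (rule minkowski_infsum[OF p1]) (use w_nonneg hX sY in \<open>auto simp: case_prod_unfold dest: has_sum_imp_summable\<close>)
  define Z where "Z = (\<lambda>i. w (fst i) (snd i) * (cmod (f (snd i)) + cmod (f (fst i) - f (snd i))) powr p)"
  have sZ: "Z summable_on ?I" using mk Z_def by simp
  have h0le: "w (fst i) (snd i) * cmod (f (fst i)) powr p \<le> Z i" for i
  proof -
    have "cmod (f (fst i)) \<le> cmod (f (snd i)) + cmod (f (fst i) - f (snd i))"
      using norm_triangle_ineq[of "f (snd i)" "f (fst i) - f (snd i)"] by simp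
    then have "cmod (f (fst i)) powr p \<le> (cmod (f (snd i)) + cmod (f (fst i) - f (snd i))) powr p"
      using p0 by (intro powr_mono2) auto
    then show ?thesis unfolding Z_def using w_nonneg by (intro mult_left_mono) auto
  qed
  have s0: "(\<lambda>(x,y). w x y * cmod (f x) powr p) summable_on ?I"
    unfolding case_prod_unfold
    by (rule summable_on_comparison_test[OF sZ]) (use h0le w_nonneg in auto)
  have it: "infsum (\<lambda>x. infsum (\<lambda>y. w x y * cmod (f x) powr p) (S (Suc m))) (S m)
      = infsum (\<lambda>(x,y). w x y * cmod (f x) powr p) ?I"
    and sit: "(\<lambda>x. infsum (\<lambda>y. w x y * cmod (f x) powr p) (S (Suc m))) summable_on S m"
    using infsum_Sigma'_banach[OF s0] summable_on_Sigma_banach[OF s0] by auto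
  have kle: "Kr m * (cmod (f x) powr p * nu x) \<le> infsum (\<lambda>y. w x y * cmod (f x) powr p) (S (Suc m))"
    if x: "x \<in> S m" for x
  proof (cases "cmod (f x) powr p = 0")
    case True then show ?thesis by simp
  next
    case False
    have "(\<lambda>y. w x y * cmod (f x) powr p) summable_on S (Suc m)"
      using summable_on_SigmaD1[OF s0 x] by simp
    then have "(\<lambda>y. w x y) summable_on S (Suc m)" using summable_on_cmult_left' False by blast
    then have su: "(\<lambda>u. w u x) summable_on S (Suc m)" by (subst w_sym) simp
    have "Kr m * nu x \<le> infsum (\<lambda>u. w u x) (S (Suc m))" by (rule K_bound[OF m x su])
    also have "\<dots> = infsum (\<lambda>y. w x y) (S (Suc m))" by (subst w_sym) simp
    finally have "Kr m * nu x * cmod (f x) powr p \<le> infsum (\<lambda>y. w x y) (S (Suc m)) * cmod (f x) powr p"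
      by (intro mult_right_mono) auto
    then show ?thesis by (simp add: infsum_cmult_left' algebra_simps)
  qed
  have "Kr m * lp_sum nu p f (S m) = infsum (\<lambda>x. Kr m * (cmod (f x) powr p * nu x)) (S m)"
    unfolding lp_sum_def by (rule infsum_cmult_right'[symmetric])
  also have "\<dots> \<le> infsum (\<lambda>x. infsum (\<lambda>y. w x y * cmod (f x) powr p) (S (Suc m))) (S m)"
    by (rule infsum_mono[OF summable_on_cmult_right[OF fs] sit kle])
  also have "\<dots> \<le> infsum Z ?I" unfolding it case_prod_unfold
    by (rule infsum_mono[OF _ sZ h0le]) (use s0 in \<open>simp add: case_prod_unfold\<close>)
  finally have k1: "Kr m * lp_sum nu p f (S m) \<le> infsum Z ?I" .
  have Kp: "0 < Kr m" "0 < Dr m" using Kr_pos Dr_pos m by auto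
  have "Kr m powr (1/p) * lp_sum nu p f (S m) powr (1/p) = (Kr m * lp_sum nu p f (S m)) powr (1/p)"
    using Kp lp_sum_nonneg by (simp add: powr_mult)
  also have "\<dots> \<le> infsum Z ?I powr (1/p)"
    using k1 Kp lp_sum_nonneg p0 by (intro powr_mono2) auto
  also have "\<dots> \<le> infsum (\<lambda>i. w (fst i) (snd i) * cmod (f (snd i)) powr p) ?I powr (1/p)
       + infsum (\<lambda>i. w (fst i) (snd i) * cmod (f (fst i) - f (snd i)) powr p) ?I powr (1/p)"
    using mk Z_def by simp
  also have "infsum (\<lambda>i. w (fst i) (snd i) * cmod (f (snd i)) powr p) ?I = infsum g (S (Suc m))"
    using hX by (simp add: case_prod_unfold infsumI)
  also have "infsum (\<lambda>i. w (fst i) (snd i) * cmod (f (fst i) - f (snd i)) powr p) ?I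
      = infsum (\<lambda>(u,v). cmod (f u - f v) powr p * w u v) ?I"
    using iY by (simp add: case_prod_unfold)
  also have "infsum g (S (Suc m)) powr (1/p) \<le> (Dr m * lp_sum nu p f (S (Suc m))) powr (1/p)"
    using sumX_le g0 p0 by (intro powr_mono2) (auto intro: infsum_nonneg)
  also have "\<dots> = Dr m powr (1/p) * lp_sum nu p f (S (Suc m)) powr (1/p)"
    using Kp lp_sum_nonneg by (simp add: powr_mult)
  finally show ?thesis by simp
qed


lemma chain:
  assumes "m \<le> n"
  shows "(\<Prod>j<m. Kr j / Dr j) powr (1/p) * lp_sum nu p f (S 0) powr (1/p)
    \<le> lp_sum nu p f (S m) powr (1/p) + (\<Sum>k<m. (1 / Kr k * (\<Prod>i\<in>{k..<m}. Kr i / Dr i)) powr (1/p)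
         * infsum (\<lambda>(u,v). cmod (f u - f v) powr p * w u v) (S k \<times> S (Suc k)) powr (1/p))"
  using assms
proof (induction m)
  case 0
  then show ?case by simp
next
  case (Suc m)
  define a where "a m = lp_sum nu p f (S m) powr (1/p)" for m
  define e where "e k = infsum (\<lambda>(u,v). cmod (f u - f v) powr p * w u v) (S k \<times> S (Suc k)) powr (1/p)" for k
  define c where "c k m = (1 / Kr k * (\<Prod>i\<in>{k..<m}. Kr i / Dr i)) powr (1/p)" for k m
  have m: "m < n" using Suc by simp
  have IH: "(\<Prod>j<m. Kr j / Dr j) powr (1/p) * a 0 \<le> a m + (\<Sum>k<m. c k m * e k)"
    using Suc unfolding a_def c_def e_def by simp
  have Kp: "0 < Kr m" "0 < Dr m" using Kr_pos Dr_pos m by auto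
  define r where "r = (Kr m / Dr m) powr (1/p)"
  have r0: "0 < r" using Kp by (simp add: r_def)
  have P0: "0 \<le> (\<Prod>j<m. Kr j / Dr j)" using Kr_pos Dr_pos m
    by (intro prod_nonneg) (auto intro: less_imp_le divide_nonneg_nonneg)
  have P: "(\<Prod>j<Suc m. Kr j / Dr j) powr (1/p) = r * (\<Prod>j<m. Kr j / Dr j) powr (1/p)"
  proof -
    have "(\<Prod>j<Suc m. Kr j / Dr j) = (Kr m / Dr m) * (\<Prod>j<m. Kr j / Dr j)" by simp
    then show ?thesis using P0 Kp by (simp only: r_def powr_mult)
  qed
  have cS: "c k (Suc m) = r * c k m" if "k < m" for k
  proof -
    have eq1: "(\<Prod>i\<in>{k..<Suc m}. Kr i / Dr i) = (\<Prod>i\<in>{k..<m}. Kr i / Dr i) * (Kr m / Dr m)"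
      using that by (simp add: prod.atLeastLessThan_Suc)
    have pn: "0 \<le> (\<Prod>i\<in>{k..<m}. Kr i / Dr i)" using Kr_pos Dr_pos m
      by (intro prod_nonneg) (auto intro: less_imp_le divide_nonneg_nonneg)
    have kk: "0 < Kr k" using Kr_pos that m by simp
    have e2: "1 / Kr k * (\<Prod>i\<in>{k..<Suc m}. Kr i / Dr i) = (Kr m / Dr m) * (1 / Kr k * (\<Prod>i\<in>{k..<m}. Kr i / Dr i))"
      unfolding eq1 by (simp add: mult_ac)
    have nn: "0 \<le> 1 / Kr k * (\<Prod>i\<in>{k..<m}. Kr i / Dr i)" using kk pn by simp
    show ?thesis using Kp nn unfolding c_def r_def e2
      by (simp only: powr_mult)
  qed
  have cm: "c m (Suc m) = 1 / Dr m powr (1/p)"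
    using Kp unfolding c_def by (simp add: powr_divide)
  have st: "Kr m powr (1/p) * a m \<le> Dr m powr (1/p) * a (Suc m) + e m"
    using step[OF m] unfolding a_def e_def .
  have ra: "r * a m \<le> a (Suc m) + e m / Dr m powr (1/p)"
  proof -
    have "r * a m = (Kr m powr (1/p) * a m) / Dr m powr (1/p)"
      using Kp by (simp add: r_def powr_divide)
    also have "\<dots> \<le> (Dr m powr (1/p) * a (Suc m) + e m) / Dr m powr (1/p)"
      using st Kp by (intro divide_right_mono) auto
    also have "\<dots> = a (Suc m) + e m / Dr m powr (1/p)"
      using Kp by (simp add: field_simps)
    finally show ?thesis .
  qed
  have "(\<Prod>j<Suc m. Kr j / Dr j) powr (1/p) * a 0 = r * ((\<Prod>j<m. Kr j / Dr j) powr (1/p) * a 0)"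
    using P by simp
  also have "\<dots> \<le> r * (a m + (\<Sum>k<m. c k m * e k))"
    using IH r0 by (intro mult_left_mono) auto
  also have "\<dots> = r * a m + (\<Sum>k<m. c k (Suc m) * e k)"
    by (simp add: distrib_left sum_distrib_left cS mult.assoc)
  also have "\<dots> \<le> a (Suc m) + (e m / Dr m powr (1/p) + (\<Sum>k<m. c k (Suc m) * e k))"
    using ra by simp
  also have "e m / Dr m powr (1/p) + (\<Sum>k<m. c k (Suc m) * e k) = (\<Sum>k<Suc m. c k (Suc m) * e k)"
    by (simp add: cm)
  finally show ?case unfolding a_def c_def e_def .
qed

end


lemma c_powr_q:
  assumes "0 < p"
  shows "((1 / Kr k * (\<Prod>i\<in>A. Kr i / Dr i)) powr (1/p)) powr q
     = 1 / Kr k powr (q/p) * (\<Prod>i\<in>A. Kr i / Dr i) powr (q/p)"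
proof -
  have "((1 / Kr k * (\<Prod>i\<in>A. Kr i / Dr i)) powr (1/p)) powr q = (1 / Kr k * (\<Prod>i\<in>A. Kr i / Dr i)) powr (q/p)"
    by (simp add: powr_powr)
  also have "\<dots> = (1 / Kr k) powr (q/p) * (\<Prod>i\<in>A. Kr i / Dr i) powr (q/p)"
    using Kr_nonneg[of k] prodKD_nonneg[of A] by (metis powr_mult divide_nonneg_nonneg zero_le_one)
  also have "(1 / Kr k) powr (q/p) = 1 / Kr k powr (q/p)"
    using Kr_nonneg[of k] by (simp add: powr_divide)
  finally show ?thesis .
qed

lemma main_p:
  assumes pq: "1 < p" "1 < q" "1/p + 1/q = 1" and flp: "in_lp nu p f"
  shows "ereal (pnorm_on nu p f UNIV)
            + ereal ((\<Sum>m=1..n. (\<Sum>k<m.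
                  (1 / Kr k powr (q / p)) *
                  (\<Prod>i\<in>{k..<m}. Kr i / Dr i) powr (q / p)) powr (p / q)) powr (1 / p))
              * grad_norm w p f
            \<ge> ereal ((\<Sum>m=0..n. \<Prod>j<m. Kr j / Dr j) powr (1 / p) * pnorm_on nu p f (S 0))"
proof -
  have p0: "0 < p" and p1: "1 \<le> p" and q0: "0 < q" using pq by auto
  define Cc where "Cc = (\<Sum>m=1..n. (\<Sum>k<m. (1 / Kr k powr (q / p)) *
                  (\<Prod>i\<in>{k..<m}. Kr i / Dr i) powr (q / p)) powr (p / q)) powr (1 / p)"
  define L where "L m = lp_sum nu p f (S m)" for m
  define a where "a m = L m powr (1/p)" for m
  have L0: "0 \<le> L m" for m unfolding L_def by (rule lp_sum_nonneg)
  have Ltot: "(\<Sum>m\<le>n. L m) \<le> lp_sum nu p f UNIV" unfolding L_def by (rule Lsum_le[OF flp])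
  have La0: "L 0 \<le> lp_sum nu p f UNIV"
  proof -
    have "L 0 \<le> (\<Sum>m\<le>n. L m)" using L0 by (intro member_le_sum) auto
    then show ?thesis using Ltot by simp
  qed
  have afin: "a 0 \<le> pnorm_on nu p f UNIV"
    unfolding a_def pnorm_on_def using La0 L0 p0 by (intro powr_mono2) auto
  show ?thesis
  proof (cases "(\<lambda>(u,v). cmod (f u - f v) powr p * w u v) summable_on UNIV")
    case False
    then have gn: "grad_norm w p f = \<infinity>" by (simp add: grad_norm_def)
    show ?thesis
    proof (cases "n = 0")
      case True
      then show ?thesis using gn afin unfolding a_def L_def pnorm_on_def by simp
    next
      case False
      have Kp: "0 < Kr 0" using Kr_pos False by simp
      have Pp: "0 < (\<Prod>i\<in>{0..<n}. Kr i / Dr i)" using Kr_pos Dr_pos by (intro prod_pos) auto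
      have t0: "0 < (1 / Kr 0 powr (q / p)) * (\<Prod>i\<in>{0..<n}. Kr i / Dr i) powr (q / p)"
      proof (rule mult_pos_pos)
        show "0 < 1 / Kr 0 powr (q / p)" using Kp by simp
        show "0 < (\<Prod>i\<in>{0..<n}. Kr i / Dr i) powr (q / p)"
          by (simp only: powr_gt_zero) (use Pp in linarith)
      qed
      have "(1 / Kr 0 powr (q / p)) * (\<Prod>i\<in>{0..<n}. Kr i / Dr i) powr (q / p)
          \<le> (\<Sum>k<n. (1 / Kr k powr (q / p)) * (\<Prod>i\<in>{k..<n}. Kr i / Dr i) powr (q / p))"
        using False by (intro member_le_sum[where i=0 and f="\<lambda>k. (1 / Kr k powr (q / p)) * (\<Prod>i\<in>{k..<n}. Kr i / Dr i) powr (q / p)"]) auto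
      with t0 have Tn: "0 < (\<Sum>k<n. (1 / Kr k powr (q / p)) * (\<Prod>i\<in>{k..<n}. Kr i / Dr i) powr (q / p))" by linarith
      have "(\<Sum>k<n. (1 / Kr k powr (q / p)) * (\<Prod>i\<in>{k..<n}. Kr i / Dr i) powr (q / p)) powr (p/q)
          \<le> (\<Sum>m=1..n. (\<Sum>k<m. (1 / Kr k powr (q / p)) *
                  (\<Prod>i\<in>{k..<m}. Kr i / Dr i) powr (q / p)) powr (p / q))"
        using False by (intro member_le_sum[where i=n and f="\<lambda>m. (\<Sum>k<m. (1 / Kr k powr (q / p)) *
                  (\<Prod>i\<in>{k..<m}. Kr i / Dr i) powr (q / p)) powr (p / q)"]) auto
      moreover have "0 < (\<Sum>k<n. (1 / Kr k powr (q / p)) * (\<Prod>i\<in>{k..<n}. Kr i / Dr i) powr (q / p)) powr (p/q)"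
        using Tn by simp
      ultimately have "0 < (\<Sum>m=1..n. (\<Sum>k<m. (1 / Kr k powr (q / p)) *
                  (\<Prod>i\<in>{k..<m}. Kr i / Dr i) powr (q / p)) powr (p / q))" by linarith
      then have "0 < Cc" unfolding Cc_def by (simp only: powr_gt_zero)
      then have inf: "ereal Cc * grad_norm w p f = \<infinity>" using gn by simp
      show ?thesis unfolding Cc_def[symmetric] inf by simp
    qed
  next
    case True
    define Gt where "Gt = infsum (\<lambda>(u,v). cmod (f u - f v) powr p * w u v) UNIV"
    have gn: "grad_norm w p f = ereal (Gt powr (1/p))" using True by (simp add: grad_norm_def Gt_def)
    define Gk where "Gk k = infsum (\<lambda>(u,v). cmod (f u - f v) powr p * w u v) (S k \<times> S (Suc k))" for k
    define e where "e k = Gk k powr (1/p)" for k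
    define c where "c k m = (1 / Kr k * (\<Prod>i\<in>{k..<m}. Kr i / Dr i)) powr (1/p)" for k m
    define g where "g m = (\<Sum>k<m. c k m * e k)" for m
    define P where "P m = (\<Prod>j<m. Kr j / Dr j)" for m
    define b where "b m = P m powr (1/p) * a 0" for m
    define T where "T m = (\<Sum>k<m. c k m powr q)" for m
    define E where "E = (\<Sum>k<n. Gk k)"
    have ch: "b m \<le> a m + g m" if "m \<le> n" for m
      using chain[OF p1 flp True that] unfolding b_def P_def a_def L_def g_def c_def e_def Gk_def .
    have Gk0: "0 \<le> Gk k" for k unfolding Gk_def by (rule infsum_nonneg) (auto simp: w_nonneg)
    have Gt0: "0 \<le> Gt" unfolding Gt_def by (rule infsum_nonneg) (auto simp: w_nonneg)
    have a0: "0 \<le> a m" for m by (simp add: a_def)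
    have e0: "0 \<le> e m" for m by (simp add: e_def)
    have c0: "0 \<le> c k m" for k m by (simp add: c_def)
    have g0: "0 \<le> g m" for m unfolding g_def using c0 e0 by (auto intro: sum_nonneg)
    have P0: "0 \<le> P m" for m unfolding P_def using prodKD_nonneg .
    have b0: "0 \<le> b m" for m using a0 by (simp add: b_def)
    have bp: "b m powr p = P m * L 0" for m
    proof -
      have "b m powr p = (P m powr (1/p)) powr p * a 0 powr p" unfolding b_def using P0 a0 by (simp add: powr_mult)
      also have "\<dots> = P m * L 0" unfolding a_def using P0 L0 p0 by (simp add: powr_powr)
      finally show ?thesis .
    qed
    have "(\<Sum>m=0..n. P m) powr (1/p) * a 0 = ((\<Sum>m=0..n. P m) * L 0) powr (1/p)"
      unfolding a_def using P0 L0 by (simp add: powr_mult sum_nonneg)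
    also have "\<dots> = (\<Sum>m=0..n. b m powr p) powr (1/p)" by (simp add: bp sum_distrib_right)
    also have "\<dots> \<le> (\<Sum>m=0..n. (a m + g m) powr p) powr (1/p)"
      using ch b0 p0 a0 g0 by (intro powr_mono2 sum_mono sum_nonneg) auto
    also have "\<dots> \<le> (\<Sum>m=0..n. a m powr p) powr (1/p) + (\<Sum>m=0..n. g m powr p) powr (1/p)"
      using minkowski_infsum[OF p1, of "{0..n}" "\<lambda>_. 1" a g] a0 g0 by simp
    also have "(\<Sum>m=0..n. a m powr p) powr (1/p) \<le> pnorm_on nu p f UNIV"
    proof -
      have "(\<Sum>m=0..n. a m powr p) = (\<Sum>m\<le>n. L m)" unfolding a_def using L0 p0
        by (simp add: powr_powr atLeast0AtMost)
      then show ?thesis unfolding pnorm_on_def using Ltot p0 L0 by (auto intro!: powr_mono2 sum_nonneg)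
    qed
    also have "(\<Sum>m=0..n. g m powr p) powr (1/p) \<le> Cc * Gt powr (1/p)"
    proof -
      have gle: "g m powr p \<le> T m powr (p/q) * E" if m: "m \<le> n" for m
      proof -
        have h1: "g m \<le> T m powr (1/q) * (\<Sum>k<m. e k powr p) powr (1/p)"
          unfolding g_def T_def using holder_sum[OF _ pq, of "{..<m}" "\<lambda>k. c k m" e] c0 e0 by simp
        have h2: "(\<Sum>k<m. e k powr p) = (\<Sum>k<m. Gk k)" unfolding e_def using Gk0 p0 by (simp add: powr_powr)
        have h3: "(\<Sum>k<m. Gk k) \<le> E" unfolding E_def using m Gk0 by (intro sum_mono2) auto
        have h4: "(\<Sum>k<m. Gk k) powr (1/p) \<le> E powr (1/p)"
          using h3 p0 Gk0 by (intro powr_mono2) (auto intro: sum_nonneg)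
        have "g m \<le> T m powr (1/q) * E powr (1/p)"
          using h1 unfolding h2 using mult_left_mono[OF h4, of "T m powr (1/q)"] by simp
        then have "g m powr p \<le> (T m powr (1/q) * E powr (1/p)) powr p"
          using g0 p0 by (intro powr_mono2) auto
        also have "\<dots> = T m powr (p/q) * E" using p0 Gk0 unfolding E_def
          by (simp add: powr_mult powr_powr sum_nonneg)
        finally show ?thesis .
      qed
      have "(\<Sum>m=0..n. g m powr p) = g 0 powr p + (\<Sum>m=Suc 0..n. g m powr p)"
        by (rule sum.atLeast_Suc_atMost) simp
      also have "\<dots> = (\<Sum>m=1..n. g m powr p)" by (simp add: g_def)
      also have "\<dots> \<le> (\<Sum>m=1..n. T m powr (p/q) * E)" by (rule sum_mono) (use gle in auto)
      finally have s1: "(\<Sum>m=0..n. g m powr p) \<le> (\<Sum>m=1..n. T m powr (p/q)) * E"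
        by (simp add: sum_distrib_right)
      have E0: "0 \<le> E" unfolding E_def using Gk0 by (auto intro: sum_nonneg)
      have "(\<Sum>m=0..n. g m powr p) powr (1/p) \<le> ((\<Sum>m=1..n. T m powr (p/q)) * E) powr (1/p)"
        using s1 p0 by (intro powr_mono2) (auto intro: sum_nonneg)
      also have "\<dots> = (\<Sum>m=1..n. T m powr (p/q)) powr (1/p) * E powr (1/p)"
        using E0 by (simp add: powr_mult sum_nonneg)
      also have "(\<Sum>m=1..n. T m powr (p/q)) = (\<Sum>m=1..n. (\<Sum>k<m. (1 / Kr k powr (q / p)) *
                  (\<Prod>i\<in>{k..<m}. Kr i / Dr i) powr (q / p)) powr (p / q))"
        unfolding T_def c_def using c_powr_q[OF p0] by simp
      also have "E powr (1/p) \<le> Gt powr (1/p)"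
        using Esum_le[OF True] E0 p0 unfolding E_def Gk_def Gt_def by (intro powr_mono2) auto
      finally show ?thesis unfolding Cc_def by (simp add: mult_left_mono)
    qed
    finally have fin: "(\<Sum>m=0..n. P m) powr (1/p) * a 0 \<le> pnorm_on nu p f UNIV + Cc * Gt powr (1/p)"
      by simp
    show ?thesis using fin unfolding gn Cc_def[symmetric] P_def a_def L_def pnorm_on_def by simp
  qed
qed


lemma main_1:
  assumes flp: "in_lp nu 1 f"
  shows "ereal (pnorm_on nu 1 f UNIV)
            + ereal (if n = 0 then 0 else
                 MAX k\<in>{..<n}. (1 / Kr k) *
                   (\<Sum>m=k..n. \<Prod>i\<in>{k..<m}. Kr i / Dr i))
              * grad_norm w 1 f
            \<ge> ereal ((\<Sum>m=0..n. \<Prod>j<m. Kr j / Dr j) * pnorm_on nu 1 f (S 0))"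
proof -
  define M where "M = (if n = 0 then 0 else MAX k\<in>{..<n}. (1 / Kr k) * (\<Sum>m=k..n. \<Prod>i\<in>{k..<m}. Kr i / Dr i))"
  define L where "L m = lp_sum nu 1 f (S m)" for m
  have pn: "pnorm_on nu 1 f A = lp_sum nu 1 f A" for A by (simp add: pnorm_on_def lp_sum_nonneg)
  have L0: "0 \<le> L m" for m unfolding L_def by (rule lp_sum_nonneg)
  have Ltot: "(\<Sum>m\<le>n. L m) \<le> lp_sum nu 1 f UNIV" unfolding L_def by (rule Lsum_le[OF flp])
  have La0: "L 0 \<le> lp_sum nu 1 f UNIV"
  proof -
    have "L 0 \<le> (\<Sum>m\<le>n. L m)" using L0 by (intro member_le_sum) auto
    then show ?thesis using Ltot by simp
  qed
  define Mk where "Mk k = (1 / Kr k) * (\<Sum>m=k..n. \<Prod>i\<in>{k..<m}. Kr i / Dr i)" for k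
  have Mk_le: "Mk k \<le> M" if "k < n" for k
    unfolding M_def Mk_def using that by (auto intro!: Max_ge)
  have Mk0: "0 \<le> Mk k" for k unfolding Mk_def
    using Kr_nonneg[of k] prodKD_nonneg by (intro mult_nonneg_nonneg sum_nonneg) auto
  have M0: "0 \<le> M"
  proof (cases "n = 0")
    case True then show ?thesis by (simp add: M_def)
  next
    case False then show ?thesis using Mk_le[of 0] Mk0[of 0] by simp
  qed
  show ?thesis
  proof (cases "(\<lambda>(u,v). cmod (f u - f v) powr 1 * w u v) summable_on UNIV")
    case False
    then have gn: "grad_norm w 1 f = \<infinity>" unfolding grad_norm_def by (simp only: if_False)
    show ?thesis
    proof (cases "n = 0")
      case True
      then show ?thesis using gn La0 by (simp add: pn L_def)
    next
      case False
      have Kp: "0 < Kr 0" using Kr_pos False by simp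
      have "1 \<le> (\<Sum>m=0..n. \<Prod>i\<in>{0..<m}. Kr i / Dr i)"
        using member_le_sum[of 0 "{0..n}" "\<lambda>m. \<Prod>i\<in>{0..<m}. Kr i / Dr i"] prodKD_nonneg by simp
      then have "0 < Mk 0" unfolding Mk_def using Kp by simp
      then have "0 < M" using Mk_le[of 0] False by simp
      then have inf: "ereal M * grad_norm w 1 f = \<infinity>" using gn by simp
      show ?thesis unfolding M_def[symmetric] inf by simp
    qed
  next
    case True
    define Gt where "Gt = infsum (\<lambda>(u,v). cmod (f u - f v) * w u v) UNIV"
    define Gk where "Gk k = infsum (\<lambda>(u,v). cmod (f u - f v) * w u v) (S k \<times> S (Suc k))" for k
    define X where "X k m = 1 / Kr k * (\<Prod>i\<in>{k..<m}. Kr i / Dr i)" for k m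
    define g where "g m = (\<Sum>k<m. X k m * Gk k)" for m
    define P where "P m = (\<Prod>j<m. Kr j / Dr j)" for m
    define E where "E = (\<Sum>k<n. Gk k)"
    have Gk0': "0 \<le> infsum (\<lambda>(u,v). cmod (f u - f v) * w u v) A" for A
      by (rule infsum_nonneg) (auto simp: w_nonneg)
    have Gk0: "0 \<le> Gk k" for k unfolding Gk_def by (rule Gk0')
    have gn: "grad_norm w 1 f = ereal Gt" using True Gk0'[of UNIV] by (simp add: grad_norm_def Gt_def)
    have X0: "0 \<le> X k m" for k m unfolding X_def by (rule X_nonneg)
    have ch: "P m * L 0 \<le> L m + g m" if "m \<le> n" for m
      using chain[of 1 f m, OF _ flp True that] unfolding P_def L_def g_def X_def Gk_def
      by (simp add: lp_sum_nonneg X_nonneg prodKD_nonneg Gk0' abs_of_nonneg[OF Kr_nonneg])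
    have gsplit: "g m = (\<Sum>k<n. (if k < m then X k m else 0) * Gk k)" if "m \<le> n" for m
    proof -
      have "g m = (\<Sum>k\<in>{k\<in>{..<n}. k < m}. X k m * Gk k)"
        unfolding g_def using that by (intro sum.cong) auto
      also have "\<dots> = (\<Sum>k<n. if k < m then X k m * Gk k else 0)" by (rule sum.inter_filter) simp
      also have "\<dots> = (\<Sum>k<n. (if k < m then X k m else 0) * Gk k)" by (rule sum.cong) auto
      finally show ?thesis .
    qed
    have col: "(\<Sum>m=0..n. (if k < m then X k m else 0)) \<le> Mk k" for k
    proof -
      have "(\<Sum>m=0..n. (if k < m then X k m else 0)) = (\<Sum>m\<in>{m\<in>{0..n}. k < m}. X k m)"
        by (rule sum.inter_filter[symmetric]) simp
      also have "\<dots> \<le> (\<Sum>m\<in>{k..n}. X k m)" using X0 by (intro sum_mono2) auto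
      also have "\<dots> = Mk k" unfolding X_def Mk_def by (simp add: sum_distrib_left)
      finally show ?thesis .
    qed
    have gsum: "(\<Sum>m=0..n. g m) \<le> M * E"
    proof -
      have "(\<Sum>m=0..n. g m) = (\<Sum>m=0..n. \<Sum>k<n. (if k < m then X k m else 0) * Gk k)"
        by (rule sum.cong) (auto simp: gsplit)
      also have "\<dots> = (\<Sum>k<n. \<Sum>m=0..n. (if k < m then X k m else 0) * Gk k)" by (rule sum.swap)
      also have "\<dots> = (\<Sum>k<n. (\<Sum>m=0..n. (if k < m then X k m else 0)) * Gk k)"
        by (simp add: sum_distrib_right)
      also have "\<dots> \<le> (\<Sum>k<n. M * Gk k)"
        by (rule sum_mono) (use col Mk_le Gk0 in \<open>auto intro!: mult_right_mono order_trans[OF col]\<close>)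
      also have "\<dots> = M * E" by (simp add: E_def sum_distrib_left)
      finally show ?thesis .
    qed
    have EG: "E \<le> Gt" using Esum_le[of f 1] True unfolding E_def Gk_def Gt_def by simp
    have "(\<Sum>m=0..n. P m) * L 0 = (\<Sum>m=0..n. P m * L 0)" by (simp add: sum_distrib_right)
    also have "\<dots> \<le> (\<Sum>m=0..n. L m + g m)" by (rule sum_mono) (use ch in auto)
    also have "\<dots> = (\<Sum>m\<le>n. L m) + (\<Sum>m=0..n. g m)" by (simp add: sum.distrib atLeast0AtMost)
    also have "\<dots> \<le> lp_sum nu 1 f UNIV + M * Gt"
      using Ltot gsum mult_left_mono[OF EG M0] by linarith
    finally have fin: "(\<Sum>m=0..n. P m) * L 0 \<le> lp_sum nu 1 f UNIV + M * Gt" .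
    show ?thesis unfolding M_def[symmetric] gn pn using fin unfolding P_def L_def by simp
  qed
qed

end

theorem theorem1p3:
  fixes w :: "'v::countable \<Rightarrow> 'v \<Rightarrow> real" and nu :: "'v \<Rightarrow> real"
    and S :: "nat \<Rightarrow> 'v set" and n :: nat
  assumes w_nonneg: "\<And>u v. 0 \<le> w u v"
    and w_sym: "\<And>u v. w u v = w v u"
    and w_diag: "\<And>u. w u u = 0"
    and nu_pos: "\<And>v. 0 < nu v"
    and disj: "\<And>i j. i \<le> n \<Longrightarrow> j \<le> n \<Longrightarrow> i \<noteq> j \<Longrightarrow> S i \<inter> S j = {}"
    and K_pos: "\<And>m. m < n \<Longrightarrow> 0 < Khat w nu S m \<and> Khat w nu S m < \<infinity>"
    and D_pos: "\<And>m. m < n \<Longrightarrow> 0 < Dhat w nu S m \<and> Dhat w nu S m < \<infinity>"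
  shows "(\<forall>p q f. 1 < p \<and> 1 < q \<and> 1 / p + 1 / q = 1 \<and> in_lp nu p f \<longrightarrow>
            ereal (pnorm_on nu p f UNIV)
            + ereal ((\<Sum>m=1..n. (\<Sum>k<m.
                  (1 / real_of_ereal (Khat w nu S k) powr (q / p)) *
                  (\<Prod>i\<in>{k..<m}. real_of_ereal (Khat w nu S i) / real_of_ereal (Dhat w nu S i))
                     powr (q / p)) powr (p / q)) powr (1 / p))
              * grad_norm w p f
            \<ge> ereal ((\<Sum>m=0..n. \<Prod>j<m. real_of_ereal (Khat w nu S j) / real_of_ereal (Dhat w nu S j))
                     powr (1 / p) * pnorm_on nu p f (S 0)))
       \<and> (\<forall>f. in_lp nu 1 f \<longrightarrow>
            ereal (pnorm_on nu 1 f UNIV)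
            + ereal (if n = 0 then 0 else
                 MAX k\<in>{..<n}. (1 / real_of_ereal (Khat w nu S k)) *
                   (\<Sum>m=k..n. \<Prod>i\<in>{k..<m}. real_of_ereal (Khat w nu S i) / real_of_ereal (Dhat w nu S i)))
              * grad_norm w 1 f
            \<ge> ereal ((\<Sum>m=0..n. \<Prod>j<m. real_of_ereal (Khat w nu S j) / real_of_ereal (Dhat w nu S j))
                     * pnorm_on nu 1 f (S 0)))"
  proof -
  interpret gsetting w nu S n
    by unfold_locales (use w_nonneg w_sym nu_pos disj K_pos D_pos in auto)
  show ?thesis
  proof (intro conjI allI impI)
    fix p q :: real and f :: "'v \<Rightarrow> complex"
    assume h: "1 < p \<and> 1 < q \<and> 1 / p + 1 / q = 1 \<and> in_lp nu p f"
    show "ereal (pnorm_on nu p f UNIV)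
            + ereal ((\<Sum>m=1..n. (\<Sum>k<m.
                  (1 / real_of_ereal (Khat w nu S k) powr (q / p)) *
                  (\<Prod>i\<in>{k..<m}. real_of_ereal (Khat w nu S i) / real_of_ereal (Dhat w nu S i))
                     powr (q / p)) powr (p / q)) powr (1 / p))
              * grad_norm w p f
            \<ge> ereal ((\<Sum>m=0..n. \<Prod>j<m. real_of_ereal (Khat w nu S j) / real_of_ereal (Dhat w nu S j))
                     powr (1 / p) * pnorm_on nu p f (S 0))"
      using main_p[of p q f] h unfolding Kr_def Dr_def by blast
  next
    fix f :: "'v \<Rightarrow> complex"
    assume h: "in_lp nu 1 f"
    show "ereal (pnorm_on nu 1 f UNIV)
            + ereal (if n = 0 then 0 else
                 MAX k\<in>{..<n}. (1 / real_of_ereal (Khat w nu S k)) *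
                   (\<Sum>m=k..n. \<Prod>i\<in>{k..<m}. real_of_ereal (Khat w nu S i) / real_of_ereal (Dhat w nu S i)))
              * grad_norm w 1 f
            \<ge> ereal ((\<Sum>m=0..n. \<Prod>j<m. real_of_ereal (Khat w nu S j) / real_of_ereal (Dhat w nu S j))
                     * pnorm_on nu 1 f (S 0))"
      using main_1[OF h] unfolding Kr_def Dr_def .
  qed
qed

end
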